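(* Let $S\subset\mathbb{R}^n$ be porous in $\mathbb{R}^n$ and let $1\le p<\infty$. Then there is a constant $c$ (independent of $x$ and $r$) such that for every $x\in S$ and every $0<r\le 1$, \[ \int_{B^n(x,r)}\left|\log\frac{1}{\operatorname{dist}(y,S)}\right|^p\,dy\le c\,r^n\left(1+\log^p\frac1r\right). \]
   Context: A set $S\subset\mathbb{R}^n$ is porous in $\mathbb{R}^n$ if there is $\kappa\in(0,1]$ such that for every $x\in\mathbb{R}^n$ and every $0<r\le1$ there is $y\in B^n(x,r)$ with $B^n(y,\kappa r)\cap S=\emptyset$. $B^n(x,r)$ is the open ball of radius $r$ centered at $x$. *)

theory Defs
  imports "HOL-Analysis.Analysis"
begin

definition porous :: "'a::euclidean_space set \<Rightarrow> bool" where
  "porous S \<longleftrightarrow> (\<exists>\<kappa>::real. 0 < \<kappa> \<and> \<kappa> \<le> 1 \<and>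
     (\<forall>x r. 0 < r \<and> r \<le> 1 \<longrightarrow> (\<exists>y\<in>ball x r. ball y (\<kappa> * r) \<inter> S = {})))"

end

theory Submission
  imports Defs
begin

lemma ball_lborel:
  fixes c :: "'a::euclidean_space"
  assumes "0 \<le> r"
  shows "emeasure lborel (ball c r) = ennreal (r ^ DIM('a) * measure lborel (ball (0::'a) 1))"
proof -
  have "emeasure lborel (ball c r) = emeasure lebesgue (ball c r)" by simp
  also have "\<dots> = ennreal (r ^ DIM('a)) * emeasure lebesgue (ball (0 :: 'a) 1)"
    using assms by (rule emeasure_lebesgue_ball_conv_unit_ball)
  also have "\<dots> = ennreal (r ^ DIM('a) * measure lborel (ball (0::'a) 1))"
    using emeasure_lborel_ball_finite[of "0::'a" 1] assms
    by (simp add: emeasure_eq_ennreal_measure ennreal_mult')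
  finally show ?thesis .
qed

lemma V_pos: "0 < measure lborel (ball (0::'a::euclidean_space) 1)"
  using content_ball_pos[of 1 "0::'a"] by simp

lemma avg:
  fixes A :: "'a::euclidean_space set"
  assumes A: "A \<in> sets lborel" and "0 \<le> \<rho>"
  shows "emeasure lborel A * emeasure lborel (ball (0::'a) \<rho>) =
         (\<integral>\<^sup>+z. emeasure lborel (A \<inter> ball z \<rho>) \<partial>lborel)"
proof -
  define f where "f = (\<lambda>(y::'a) (z::'a). indicator A y * indicator {p::'a\<times>'a. dist (fst p) (snd p) < \<rho>} (y,z) :: ennreal)"
  have meas: "case_prod f \<in> borel_measurable (lborel \<Otimes>\<^sub>M lborel)"
  proof -
    have o: "open {p::'a\<times>'a. dist (fst p) (snd p) < \<rho>}"
      by (intro open_Collect_less continuous_intros)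
    have "{p::'a\<times>'a. dist (fst p) (snd p) < \<rho>} \<in> sets (lborel \<Otimes>\<^sub>M lborel)"
      proof -
        have "sets (lborel \<Otimes>\<^sub>M lborel) = sets (borel \<Otimes>\<^sub>M (borel::'a measure))"
          by (intro sets_pair_measure_cong) simp_all
        then show ?thesis using o borel_open[OF o] borel_prod[where ?'a='a and ?'b='a] by metis
      qed
    then show ?thesis unfolding f_def using A
      by (auto intro!: borel_measurable_times_ennreal borel_measurable_indicator measurable_compose[OF measurable_fst])
  qed
  have "(\<integral>\<^sup>+z. emeasure lborel (A \<inter> ball z \<rho>) \<partial>lborel) = (\<integral>\<^sup>+z. (\<integral>\<^sup>+y. f y z \<partial>lborel) \<partial>lborel)"
  proof (rule nn_integral_cong)
    fix z :: 'a
    have "emeasure lborel (A \<inter> ball z \<rho>) = (\<integral>\<^sup>+y. indicator (A \<inter> ball z \<rho>) y \<partial>lborel)"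
      using A by (simp add: nn_integral_indicator)
    also have "\<dots> = (\<integral>\<^sup>+y. f y z \<partial>lborel)"
      by (rule nn_integral_cong) (auto simp: f_def indicator_def dist_commute)
    finally show "emeasure lborel (A \<inter> ball z \<rho>) = (\<integral>\<^sup>+y. f y z \<partial>lborel)" .
  qed
  also have "\<dots> = (\<integral>\<^sup>+y. (\<integral>\<^sup>+z. f y z \<partial>lborel) \<partial>lborel)"
    by (rule lborel_pair.Fubini'[OF meas])
  also have "\<dots> = (\<integral>\<^sup>+y. emeasure lborel (ball (0::'a) \<rho>) * indicator A y \<partial>lborel)"
  proof (rule nn_integral_cong)
    fix y :: 'a
    have "(\<integral>\<^sup>+z. f y z \<partial>lborel) = (\<integral>\<^sup>+z. indicator A y * indicator (ball y \<rho>) z \<partial>lborel)"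
      by (rule nn_integral_cong) (auto simp: f_def indicator_def)
    also have "\<dots> = indicator A y * emeasure lborel (ball y \<rho>)"
      by (subst nn_integral_cmult_indicator) auto
    also have "\<dots> = emeasure lborel (ball (0::'a) \<rho>) * indicator A y"
      using assms by (simp add: ball_lborel mult.commute)
    finally show "(\<integral>\<^sup>+z. f y z \<partial>lborel) = emeasure lborel (ball (0::'a) \<rho>) * indicator A y" .
  qed
  also have "\<dots> = emeasure lborel (ball (0::'a) \<rho>) * emeasure lborel A"
    using A by (simp add: nn_integral_cmult_indicator)
  finally show ?thesis by (simp add: mult.commute)
qed

lemma infdist_hole:
  fixes S :: "'a::euclidean_space set"
  assumes "S \<noteq> {}" "ball w e \<inter> S = {}"
  shows "e \<le> infdist w S"
  unfolding infdist_notempty[OF assms(1)]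
proof (rule cINF_greatest)
  show "S \<noteq> {}" by fact
  fix s assume "s \<in> S"
  then show "e \<le> dist w s" using assms(2) by (auto simp: ball_def not_less[symmetric])
qed

lemma step:
  fixes S :: "'a::euclidean_space set"
  assumes P: "\<forall>x r. 0 < r \<and> r \<le> 1 \<longrightarrow> (\<exists>y\<in>ball x r. ball y (\<kappa> * r) \<inter> S = {})"
    and k: "0 < \<kappa>" "\<kappa> \<le> 1" and Sne: "S \<noteq> {}" and rho: "0 < \<rho>" "\<rho> \<le> 1" and R: "0 \<le> R"
  shows "measure lborel ({y. infdist y S < \<kappa>/4*\<rho>} \<inter> ball x R)
     \<le> (1 - (\<kappa>/4)^DIM('a)) * measure lborel ({y. infdist y S < 2*\<rho>} \<inter> ball x (R+\<rho>))"
proof -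
  define h where "h = \<kappa>/4"
  define n where "n = DIM('a)"
  define V where "V = measure lborel (ball (0::'a) 1)"
  define A where "A = {y. infdist y S < h*\<rho>} \<inter> ball x R"
  define F where "F = {y. infdist y S < 2*\<rho>} \<inter> ball x (R+\<rho>)"
  define c where "c = (1-h^n)*(\<rho>^n*V)"
  have V: "0 < V" unfolding V_def by (rule V_pos)
  have h: "0 < h" "h \<le> 1/4" using k by (auto simp: h_def)
  have hn: "h^n \<le> 1" using h by (intro power_le_one) auto
  have c0: "0 \<le> c" unfolding c_def using hn V rho by auto
  have oA: "open A" unfolding A_def by (intro open_Int open_Collect_less continuous_intros) auto
  have oF: "open F" unfolding F_def by (intro open_Int open_Collect_less continuous_intros) auto
  have sA: "A \<in> sets lborel" "F \<in> sets lborel" using oA oF by auto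
  have "emeasure lborel A \<le> emeasure lborel (ball x R)" by (rule emeasure_mono) (auto simp: A_def)
  then have fA: "emeasure lborel A = ennreal (measure lborel A)"
    using emeasure_lborel_ball_finite[of x R] by (intro emeasure_eq_ennreal_measure) (auto simp: top_unique)
  have "emeasure lborel F \<le> emeasure lborel (ball x (R+\<rho>))" by (rule emeasure_mono) (auto simp: F_def)
  then have fF: "emeasure lborel F = ennreal (measure lborel F)"
    using emeasure_lborel_ball_finite[of x "R+\<rho>"] by (intro emeasure_eq_ennreal_measure) (auto simp: top_unique)
  have pt: "emeasure lborel (A \<inter> ball z \<rho>) \<le> ennreal c * indicator F z" for z
  proof (cases "z \<in> F")
    case False
    have "A \<inter> ball z \<rho> = {}"
    proof (rule ccontr)
      assume "A \<inter> ball z \<rho> \<noteq> {}"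
      then obtain u where u: "u \<in> A" "dist z u < \<rho>" by auto
      have "infdist z S \<le> infdist u S + dist z u" by (rule infdist_triangle)
      moreover have "dist z x \<le> dist z u + dist u x" by (rule dist_triangle)
      moreover have "h*\<rho> \<le> \<rho>" using h rho by (simp add: mult_le_cancel_right1)
      ultimately have "z \<in> F" using u unfolding A_def F_def
        by (auto simp: dist_commute)
      with False show False by simp
    qed
    then show ?thesis by simp
  next
    case True
    obtain w where w: "w \<in> ball z (\<rho>/2)" "ball w (\<kappa> * (\<rho>/2)) \<inter> S = {}"
      using P rho by (metis half_gt_zero le_less_trans less_eq_real_def linorder_not_le field_sum_of_halves less_add_same_cancel1 )
    have iw: "\<kappa> * (\<rho>/2) \<le> infdist w S" by (rule infdist_hole[OF Sne w(2)])
    define H where "H = ball w (h*\<rho>)"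
    have Hsub: "H \<subseteq> ball z \<rho>"
    proof
      fix u assume "u \<in> H"
      then have "dist w u < h*\<rho>" by (simp add: H_def)
      moreover have "dist z u \<le> dist z w + dist w u" by (rule dist_triangle)
      moreover have "h*\<rho> \<le> \<rho>/2" using h rho by (simp add: h_def)
      ultimately show "u \<in> ball z \<rho>" using w(1) by simp
    qed
    have HA: "A \<inter> ball z \<rho> \<subseteq> ball z \<rho> - H"
    proof
      fix u assume u: "u \<in> A \<inter> ball z \<rho>"
      have "u \<notin> H"
      proof
        assume "u \<in> H"
        then have "dist w u < h*\<rho>" by (simp add: H_def)
        moreover have "infdist w S \<le> infdist u S + dist w u" by (rule infdist_triangle)
        moreover have "infdist u S < h*\<rho>" using u by (simp add: A_def)
        ultimately show False using iw by (simp add: h_def)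
      qed
      then show "u \<in> ball z \<rho> - H" using u by simp
    qed
    have "emeasure lborel (A \<inter> ball z \<rho>) \<le> emeasure lborel (ball z \<rho> - H)"
      by (rule emeasure_mono[OF HA]) (auto simp: H_def)
    also have "\<dots> = emeasure lborel (ball z \<rho>) - emeasure lborel H"
      using Hsub emeasure_lborel_ball_finite[of w "h*\<rho>"] by (intro emeasure_Diff) (auto simp: H_def)
    also have "\<dots> = ennreal (\<rho>^n*V) - ennreal ((h*\<rho>)^n*V)"
      using rho h by (simp add: H_def ball_lborel n_def V_def)
    also have "\<dots> = ennreal c"
      using rho h V by (subst ennreal_minus) (auto simp: c_def power_mult_distrib algebra_simps)
    finally show ?thesis using True by simp
  qed
  have "ennreal (measure lborel A * (\<rho>^n*V)) = emeasure lborel A * emeasure lborel (ball (0::'a) \<rho>)"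
    using rho V by (simp add: fA ball_lborel n_def V_def ennreal_mult)
  also have "\<dots> = (\<integral>\<^sup>+z. emeasure lborel (A \<inter> ball z \<rho>) \<partial>lborel)"
    using sA rho by (intro avg) auto
  also have "\<dots> \<le> (\<integral>\<^sup>+z. ennreal c * indicator F z \<partial>lborel)"
    by (intro nn_integral_mono pt)
  also have "\<dots> = ennreal c * emeasure lborel F"
    using sA by (simp add: nn_integral_cmult_indicator)
  also have "\<dots> = ennreal (c * measure lborel F)"
    using c0 by (simp add: fF ennreal_mult)
  finally have "measure lborel A * (\<rho>^n*V) \<le> c * measure lborel F"
    using c0 by (subst (asm) ennreal_le_iff) auto
  then have "measure lborel A * (\<rho>^n*V) \<le> ((1-h^n) * measure lborel F) * (\<rho>^n*V)"
    by (simp add: c_def algebra_simps)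
  then have "measure lborel A \<le> (1-h^n) * measure lborel F"
    using rho V by (subst (asm) mult_le_cancel_right_pos) auto
  then show ?thesis by (simp add: A_def F_def h_def n_def)
qed


lemma iter:
  fixes S :: "'a::euclidean_space set"
  assumes P: "\<forall>x r. 0 < r \<and> r \<le> 1 \<longrightarrow> (\<exists>y\<in>ball x r. ball y (\<kappa> * r) \<inter> S = {})"
    and k: "0 < \<kappa>" "\<kappa> \<le> 1" and Sne: "S \<noteq> {}" and r: "0 < r" "r \<le> 1"
  shows "\<forall>R. 0 \<le> R \<longrightarrow> R \<le> r + 2*r*(\<kappa>/8)^m \<longrightarrow>
     measure lborel ({y. infdist y S < 2*r*(\<kappa>/8)^m} \<inter> ball x R)
       \<le> (1-(\<kappa>/4)^DIM('a))^m * measure lborel (ball x (3*r))"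
proof (induction m)
  case 0
  show ?case
  proof (intro allI impI)
    fix R :: real assume R: "0 \<le> R" "R \<le> r + 2*r*(\<kappa>/8)^0"
    have "{y. infdist y S < 2*r} \<inter> ball x R \<subseteq> ball x (3*r)" using R by auto
    then show "measure lborel ({y. infdist y S < 2*r*(\<kappa>/8)^0} \<inter> ball x R)
       \<le> (1-(\<kappa>/4)^DIM('a))^0 * measure lborel (ball x (3*r))"
      unfolding power_0 mult_1 mult_1_right
      apply (rule measure_mono_fmeasurable)
       apply (subgoal_tac "open ({y. infdist y S < 2*r} \<inter> ball x R)")
        apply simp
       apply (intro open_Int open_Collect_less continuous_intros; simp)
      using emeasure_lborel_ball_finite[of x "3*r"] by (intro fmeasurableI) auto
  qed
next
  case (Suc m)
  show ?case
  proof (intro allI impI)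
    fix R :: real assume R: "0 \<le> R" "R \<le> r + 2*r*(\<kappa>/8)^Suc m"
    define \<rho> where "\<rho> = r*(\<kappa>/8)^m"
    have rho: "0 < \<rho>" "\<rho> \<le> 1" unfolding \<rho>_def using k r
      by (auto intro!: mult_le_one power_le_one)
    have eq: "2*r*(\<kappa>/8)^Suc m = \<kappa>/4*\<rho>" by (simp add: \<rho>_def)
    have th: "0 \<le> 1-(\<kappa>/4)^DIM('a)" using k by (auto intro!: power_le_one)
    have e2: "2*r*(\<kappa>/8)^m = 2*\<rho>" by (simp add: \<rho>_def)
    have "\<kappa>/4*\<rho> \<le> \<rho>" using k rho by (simp add: mult_le_cancel_right1)
    then have RR: "R + \<rho> \<le> r + 2*\<rho>" using R(2) eq by linarith
    have IH: "measure lborel ({y. infdist y S < 2*\<rho>} \<inter> ball x (R+\<rho>))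
       \<le> (1-(\<kappa>/4)^DIM('a))^m * measure lborel (ball x (3*r))"
      using Suc.IH[unfolded e2, rule_format, of "R+\<rho>"] RR R(1) rho(1) by linarith
    have "measure lborel ({y. infdist y S < 2*r*(\<kappa>/8)^Suc m} \<inter> ball x R)
      \<le> (1 - (\<kappa>/4)^DIM('a)) * measure lborel ({y. infdist y S < 2*\<rho>} \<inter> ball x (R+\<rho>))"
      unfolding eq by (rule step[OF P k Sne rho R(1)])
    also have "\<dots> \<le> (1 - (\<kappa>/4)^DIM('a)) * ((1-(\<kappa>/4)^DIM('a))^m * measure lborel (ball x (3*r)))"
      by (rule mult_left_mono[OF IH th])
    finally show "measure lborel ({y. infdist y S < 2*r*(\<kappa>/8)^Suc m} \<inter> ball x R)
       \<le> (1-(\<kappa>/4)^DIM('a))^Suc m * measure lborel (ball x (3*r))" by (simp add: mult.assoc)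
  qed
qed


lemma powr_sum_le:
  fixes u v p :: real
  assumes "0 \<le> u" "0 \<le> v" "0 \<le> p"
  shows "(u+v) powr p \<le> 2 powr p * (u powr p + v powr p)"
proof -
  have "u+v \<le> 2*max u v" by auto
  then have "(u+v) powr p \<le> (2*max u v) powr p" using assms by (intro powr_mono2) auto
  also have "\<dots> = 2 powr p * max u v powr p" using assms by (simp add: powr_mult)
  also have "max u v powr p \<le> u powr p + v powr p" by (cases "u \<le> v") (auto simp: max_def)
  then have "2 powr p * max u v powr p \<le> 2 powr p * (u powr p + v powr p)" by (rule mult_left_mono) simp
  finally show ?thesis .
qed

lemma growth:
  fixes \<epsilon> :: real
  assumes "0 < \<epsilon>" "\<epsilon> \<le> 1"
  shows "real k + 1 \<le> exp (\<epsilon> * real k) / \<epsilon>"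
proof -
  have "1 + \<epsilon> * real k \<le> exp (\<epsilon> * real k)" by (rule exp_ge_add_one_self)
  moreover have "(real k + 1) * \<epsilon> = \<epsilon> * real k + \<epsilon>" by (simp add: algebra_simps)
  ultimately have "(real k + 1) * \<epsilon> \<le> exp (\<epsilon> * real k)" using assms by linarith
  then show ?thesis using assms by (simp add: pos_le_divide_eq)
qed


lemma pointwise:
  fixes S :: "'a::euclidean_space set"
  assumes x: "x \<in> S" and r: "0 < r" "r \<le> 1" and a: "0 < a" "a < 1"
    and e: "0 < \<epsilon>" "\<epsilon> \<le> 1" and p: "1 \<le> p" and y: "y \<in> ball x r"
  shows "\<bar>ln (1 / infdist y S)\<bar> powr p \<le> 2 powr p * ln (1/r) powr p \<or>
    (\<exists>k. infdist y S < 2*r*a^k \<and> \<bar>ln (1 / infdist y S)\<bar> powr p \<le>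
        2 powr p * ln (1/r) powr p + 2 powr p * ((ln (1/a) / \<epsilon>) powr p * exp (\<epsilon>*p) ^ k))"
proof (cases "infdist y S = 0")
  case True
  then show ?thesis by simp
next
  case False
  define d where "d = infdist y S"
  define L where "L = ln (1/a)"
  have d: "0 < d" using False infdist_nonneg[of y S] by (simp add: d_def)
  have "d \<le> dist y x" unfolding d_def by (rule infdist_le[OF x])
  then have dr: "d < r" using y by (simp add: dist_commute)
  define u where "u = ln (1/r)"
  define v where "v = ln (r/d)"
  have u: "0 \<le> u" using r by (simp add: u_def)
  have v: "0 < v" using d dr by (simp add: v_def)
  have L: "0 < L" using a by (simp add: L_def)
  have uv: "ln (1/d) = u + v" using d r by (simp add: u_def v_def ln_div)
  have abs: "\<bar>ln (1 / infdist y S)\<bar> = u + v" using uv u v by (simp add: d_def)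
  define k where "k = nat \<lfloor>v/L\<rfloor>"
  have k1: "real k \<le> v/L" using v L by (simp add: k_def)
  have k2: "v/L < real k + 1" using v L by (simp add: k_def)
  have kL: "real k * L \<le> v" using k1 L by (simp add: pos_le_divide_eq)
  have kL2: "v \<le> (real k + 1) * L" using k2 L by (simp add: pos_divide_less_eq less_imp_le)
  have ak: "a^k = exp (- (real k * L))"
    using a by (simp add: L_def ln_div exp_of_nat_mult exp_ln)
  have "ln d \<le> ln r - real k * L" using kL d r by (simp add: v_def ln_div)
  then have "d \<le> exp (ln r - real k * L)" using d by (metis exp_ln exp_le_cancel_iff)
  also have "\<dots> = r * a^k" using r by (simp add: ak exp_diff exp_minus field_simps)
  finally have dk: "infdist y S < 2*r*a^k" using r a d by (simp add: d_def)
  have "v powr p \<le> ((real k + 1) * L) powr p" using kL2 v p by (intro powr_mono2) auto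
  also have "\<dots> \<le> (exp (\<epsilon> * real k) / \<epsilon> * L) powr p"
    using growth[OF e, of k] L p by (intro powr_mono2 mult_right_mono) auto
  also have "\<dots> = (L/\<epsilon>) powr p * exp (\<epsilon>*p) ^ k"
  proof -
    have "(exp (\<epsilon> * real k) / \<epsilon> * L) = exp (\<epsilon> * real k) * (L/\<epsilon>)" by simp
    then have "(exp (\<epsilon> * real k) / \<epsilon> * L) powr p = (exp (\<epsilon> * real k) * (L/\<epsilon>)) powr p"
      by simp
    also have "\<dots> = exp (\<epsilon> * real k) powr p * (L/\<epsilon>) powr p"
      using L e by (intro powr_mult)
    also have "exp (\<epsilon> * real k) powr p = exp (\<epsilon>*p) ^ k"
      by (simp add: powr_def exp_of_nat_mult[symmetric] algebra_simps)
    finally show ?thesis by simp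
  qed
  finally have vb: "v powr p \<le> (L/\<epsilon>) powr p * exp (\<epsilon>*p) ^ k" .
  have "\<bar>ln (1 / infdist y S)\<bar> powr p \<le> 2 powr p * (u powr p + v powr p)"
    unfolding abs using u v p by (intro powr_sum_le) auto
  also have "\<dots> \<le> 2 powr p * u powr p + 2 powr p * ((L/\<epsilon>) powr p * exp (\<epsilon>*p) ^ k)"
    using vb by (simp add: algebra_simps)
  finally show ?thesis using dk by (auto simp: u_def L_def)
qed


lemma ennreal_le_suminf: "(f k :: ennreal) \<le> suminf f"
  using sum_le_suminf[of f "{k}"] by (simp add: summableI)

theorem lemma2p3:
  fixes S :: "'n::euclidean_space set" and p :: real
  assumes "porous S" and "1 \<le> p"
  shows "\<exists>c::real. \<forall>x\<in>S. \<forall>r. 0 < r \<and> r \<le> 1 \<longrightarrow>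
           (\<integral>\<^sup>+ y \<in> ball x r. ennreal (\<bar>ln (1 / infdist y S)\<bar> powr p) \<partial>lebesgue)
             \<le> ennreal (c * r ^ DIM('n) * (1 + (ln (1 / r)) powr p))"
proof (cases "S = {}")
  case True
  then show ?thesis by auto
next
  case Sne: False
  obtain \<kappa> :: real where k: "0 < \<kappa>" "\<kappa> \<le> 1"
    and P: "\<forall>x r. 0 < r \<and> r \<le> 1 \<longrightarrow> (\<exists>y\<in>ball x r. ball y (\<kappa> * r) \<inter> S = {})"
    using assms(1) unfolding porous_def by blast
  have p: "1 \<le> p" by fact
  define n where "n = DIM('n)"
  define V where "V = measure lborel (ball (0::'n) 1)"
  define a where "a = \<kappa>/8"
  define \<theta> where "\<theta> = 1 - (\<kappa>/4)^n"
  define L where "L = ln (1/a)"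
  define \<epsilon> where "\<epsilon> = min 1 (- ln \<theta> / (2*p))"
  define Q where "Q = exp (\<epsilon>*p)"
  define q where "q = Q * \<theta>"
  define D where "D = (L/\<epsilon>) powr p"
  define K where "K = 2 powr p * D * V * 3^n / (1-q)"
  define C where "C = 2 powr p * V + K"
  have V: "0 < V" unfolding V_def by (rule V_pos)
  have n: "0 < n" by (simp add: n_def)
  have a: "0 < a" "a < 1" using k by (auto simp: a_def)
  have hn: "0 < (\<kappa>/4)^n" "(\<kappa>/4)^n < 1" using k n by (auto simp: power_less_one_iff)
  have th: "0 < \<theta>" "\<theta> < 1" using hn by (auto simp: \<theta>_def)
  have lth: "ln \<theta> < 0" using th by simp
  have e: "0 < \<epsilon>" "\<epsilon> \<le> 1" using lth p by (auto simp: \<epsilon>_def divide_neg_pos)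
  have "\<epsilon> * p \<le> - ln \<theta> / 2" using p lth by (auto simp: \<epsilon>_def min_def field_simps)
  then have "\<epsilon> * p + ln \<theta> < 0" using lth by linarith
  then have "exp (\<epsilon> * p + ln \<theta>) < 1" by simp
  then have q: "0 < q" "q < 1" using th by (auto simp: q_def Q_def exp_add)
  have D: "0 \<le> D" by (simp add: D_def)
  have K: "0 \<le> K" using D V q by (simp add: K_def)
  show ?thesis
  proof (intro exI[of _ C] ballI allI impI)
    fix x :: 'n and r :: real assume x: "x \<in> S" and r: "0 < r \<and> r \<le> 1"
    then have r: "0 < r" "r \<le> 1" by auto
    define u where "u = ln (1/r)"
    have u: "0 \<le> u" using r by (simp add: u_def)
    define A where "A = (\<lambda>k::nat. {y. infdist y S < 2*r*a^k} \<inter> ball x r)"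
    have sA: "A k \<in> sets lborel" for k
    proof -
      have "open (A k)" unfolding A_def by (intro open_Int open_Collect_less continuous_intros) auto
      then show ?thesis by simp
    qed
    have mA: "emeasure lborel (A k) \<le> ennreal (\<theta>^k * ((3*r)^n * V))" for k
    proof -
      have "emeasure lborel (A k) \<le> emeasure lborel (ball x r)" by (rule emeasure_mono) (auto simp: A_def)
      then have fin: "emeasure lborel (A k) = ennreal (measure lborel (A k))"
        using emeasure_lborel_ball_finite[of x r] by (intro emeasure_eq_ennreal_measure) (auto simp: top_unique)
      have "measure lborel (A k) \<le> \<theta>^k * measure lborel (ball x (3*r))"
        using iter[OF P k Sne r, of k x, rule_format, of r] r unfolding A_def a_def \<theta>_def n_def using k by simp
      also have "measure lborel (ball x (3*r)) = (3*r)^n * V"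
        using ball_lborel[of "3*r" x] r by (simp add: measure_def n_def V_def)
      finally show ?thesis unfolding fin by (rule ennreal_leI)
    qed
    define g where "g = (\<lambda>y. ennreal (\<bar>ln (1 / infdist y S)\<bar> powr p) * indicator (ball x r) y)"
    define G where "G = (\<lambda>y. ennreal (2 powr p * u powr p) * indicator (ball x r) y
                + (\<Sum>k. ennreal (2 powr p * (D * Q^k)) * indicator (A k) y))"
    have gG: "g y \<le> G y" for y
    proof (cases "y \<in> ball x r")
      case False then show ?thesis by (simp add: g_def)
    next
      case True
      have sm: "ennreal (2 powr p * (D * Q^k)) * indicator (A k) y \<le> (\<Sum>k. ennreal (2 powr p * (D * Q^k)) * indicator (A k) y)" for k
        by (rule ennreal_le_suminf)
      from pointwise[OF x r a e p True]
      show ?thesis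
      proof
        assume "\<bar>ln (1 / infdist y S)\<bar> powr p \<le> 2 powr p * ln (1/r) powr p"
        then have "g y \<le> ennreal (2 powr p * u powr p) * indicator (ball x r) y"
          using True by (simp add: g_def u_def ennreal_leI)
        also have "\<dots> \<le> G y" unfolding G_def by simp
        finally show ?thesis .
      next
        assume "\<exists>k. infdist y S < 2*r*a^k \<and> \<bar>ln (1 / infdist y S)\<bar> powr p \<le>
          2 powr p * ln (1/r) powr p + 2 powr p * ((ln (1/a) / \<epsilon>) powr p * exp (\<epsilon>*p) ^ k)"
        then obtain k where k1: "infdist y S < 2*r*a^k" and
          k2: "\<bar>ln (1 / infdist y S)\<bar> powr p \<le> 2 powr p * u powr p + 2 powr p * (D * Q^k)"
          by (auto simp: D_def Q_def L_def u_def)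
        have yA: "y \<in> A k" using k1 True by (simp add: A_def)
        have "g y \<le> ennreal (2 powr p * u powr p + 2 powr p * (D * Q^k))"
          using True k2 by (simp add: g_def ennreal_leI)
        also have "\<dots> = ennreal (2 powr p * u powr p) + ennreal (2 powr p * (D * Q^k))"
          using D by (intro ennreal_plus) (auto simp: Q_def)
        also have "\<dots> \<le> G y" unfolding G_def using True yA sm[of k]
          by (intro add_mono) auto
        finally show ?thesis .
      qed
    qed
    have "(\<integral>\<^sup>+ y \<in> ball x r. ennreal (\<bar>ln (1 / infdist y S)\<bar> powr p) \<partial>lebesgue) = (\<integral>\<^sup>+ y. g y \<partial>lborel)"
      unfolding g_def by (rule nn_integral_completion)
    also have "\<dots> \<le> (\<integral>\<^sup>+ y. G y \<partial>lborel)" by (intro nn_integral_mono gG)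
    also have "\<dots> = ennreal (2 powr p * u powr p) * emeasure lborel (ball x r)
        + (\<Sum>k. ennreal (2 powr p * (D * Q^k)) * emeasure lborel (A k))"
    proof -
      have m2: "(\<lambda>y. \<Sum>k. ennreal (2 powr p * (D * Q^k)) * indicator (A k) y) \<in> borel_measurable lborel"
        by (intro borel_measurable_suminf_order borel_measurable_times_ennreal borel_measurable_const borel_measurable_indicator sA)
      have "(\<integral>\<^sup>+ y. G y \<partial>lborel) = (\<integral>\<^sup>+ y. ennreal (2 powr p * u powr p) * indicator (ball x r) y \<partial>lborel)
           + (\<integral>\<^sup>+ y. (\<Sum>k. ennreal (2 powr p * (D * Q^k)) * indicator (A k) y) \<partial>lborel)"
        unfolding G_def by (rule nn_integral_add[OF _ m2]) (intro borel_measurable_times_ennreal borel_measurable_const borel_measurable_indicator; simp)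
      also have "(\<integral>\<^sup>+ y. (\<Sum>k. ennreal (2 powr p * (D * Q^k)) * indicator (A k) y) \<partial>lborel)
          = (\<Sum>k. (\<integral>\<^sup>+ y. ennreal (2 powr p * (D * Q^k)) * indicator (A k) y \<partial>lborel))"
        by (intro nn_integral_suminf borel_measurable_times_ennreal borel_measurable_const borel_measurable_indicator sA)
      also have "\<dots> = (\<Sum>k. ennreal (2 powr p * (D * Q^k)) * emeasure lborel (A k))"
        by (rule arg_cong[where f=suminf], rule ext, rule nn_integral_cmult_indicator[OF sA])
      also have "(\<integral>\<^sup>+ y. ennreal (2 powr p * u powr p) * indicator (ball x r) y \<partial>lborel)
          = ennreal (2 powr p * u powr p) * emeasure lborel (ball x r)"
        by (rule nn_integral_cmult_indicator) simp
      finally show ?thesis .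
    qed
    also have "\<dots> \<le> ennreal (2 powr p * u powr p * (r^n * V)) + ennreal (K * r^n)"
    proof (rule add_mono)
      show "ennreal (2 powr p * u powr p) * emeasure lborel (ball x r) \<le> ennreal (2 powr p * u powr p * (r^n * V))"
        using r V by (simp add: ball_lborel n_def V_def ennreal_mult)
      have "(\<Sum>k. ennreal (2 powr p * (D * Q^k)) * emeasure lborel (A k))
          \<le> (\<Sum>k. ennreal ((2 powr p * D * 3^n * r^n * V) * q^k))"
      proof (intro suminf_le summableI)
        fix k
        have "ennreal (2 powr p * (D * Q^k)) * emeasure lborel (A k) \<le> ennreal (2 powr p * (D * Q^k)) * ennreal (\<theta>^k * ((3*r)^n * V))"
          by (intro mult_left_mono mA) auto
        also have "\<dots> = ennreal ((2 powr p * D * 3^n * r^n * V) * q^k)"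
        proof -
          have e1: "(3*r)^n = 3^n * r^n" and e2: "q^k = Q^k * \<theta>^k" by (simp_all add: q_def power_mult_distrib)
          have "ennreal (2 powr p * (D * Q^k)) * ennreal (\<theta>^k * ((3*r)^n * V))
              = ennreal (2 powr p * (D * Q^k) * (\<theta>^k * ((3*r)^n * V)))"
            using D th V r by (intro ennreal_mult[symmetric] mult_nonneg_nonneg zero_le_power) (simp_all add: Q_def less_imp_le)
          also have "2 powr p * (D * Q^k) * (\<theta>^k * ((3*r)^n * V)) = (2 powr p * D * 3^n * r^n * V) * q^k"
            unfolding e1 e2 by (simp only: mult_ac)
          finally show ?thesis .
        qed
        finally show "ennreal (2 powr p * (D * Q^k)) * emeasure lborel (A k) \<le> ennreal ((2 powr p * D * 3^n * r^n * V) * q^k)" .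
      qed
      also have "\<dots> = ennreal (\<Sum>k. (2 powr p * D * 3^n * r^n * V) * q^k)"
        using q D V r by (intro suminf_ennreal2 summable_mult summable_geometric) auto
      also have "(\<Sum>k. (2 powr p * D * 3^n * r^n * V) * q^k) = K * r^n"
        using q by (simp add: suminf_mult suminf_geometric summable_geometric K_def)
      finally show "(\<Sum>k. ennreal (2 powr p * (D * Q^k)) * emeasure lborel (A k)) \<le> ennreal (K * r^n)" .
    qed
    also have "\<dots> = ennreal (2 powr p * u powr p * (r^n * V) + K * r^n)"
      using r V K by (intro ennreal_plus[symmetric]) auto
    also have "\<dots> \<le> ennreal (C * r ^ DIM('n) * (1 + (ln (1 / r)) powr p))"
    proof (rule ennreal_leI)
      have "2 powr p * u powr p * (r^n * V) = 2 powr p * V * r^n * u powr p" by (simp only: mult_ac)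
      then have "2 powr p * u powr p * (r^n * V) \<le> 2 powr p * V * r^n * u powr p" by simp
      moreover have "K * r^n \<le> K * r^n * (1 + u powr p)" using K r by (simp add: algebra_simps)
      moreover have "2 powr p * V * r^n * u powr p \<le> 2 powr p * V * r^n * (1 + u powr p)"
        using V r by (intro mult_left_mono) auto
      moreover have "C * r ^ DIM('n) * (1 + (ln (1 / r)) powr p) = 2 powr p * V * r^n * (1 + u powr p) + K * r^n * (1 + u powr p)"
        unfolding C_def u_def n_def by (simp add: distrib_right distrib_left mult_ac)
      ultimately show "2 powr p * u powr p * (r^n * V) + K * r^n \<le> C * r ^ DIM('n) * (1 + (ln (1 / r)) powr p)"
        by linarith
    qed
    finally show "(\<integral>\<^sup>+ y \<in> ball x r. ennreal (\<bar>ln (1 / infdist y S)\<bar> powr p) \<partial>lebesgue)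
             \<le> ennreal (C * r ^ DIM('n) * (1 + (ln (1 / r)) powr p))" .
  qed
qed

end
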